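(* For every connected graph $G$ with no isolated vertices, $$\gamma_t(G) \le \left\lceil \frac{2(\gamma(G)+\gamma_c(G))}{3}\right\rceil.$$ Moreover, this bound is tight.
   Context: All graphs are finite, simple and undirected. A set $S\subseteq V(G)$ is a dominating set if every vertex not in $S$ is adjacent to some vertex of $S$; $\gamma(G)$ is the minimum size of a dominating set. A set $S$ is a total dominating set if every vertex of $G$ (including those in $S$) is adjacent to some vertex of $S$; $\gamma_t(G)$ is the minimum size of a total dominating set. A set $S$ is a connected dominating set if it is dominating and the subgraph induced by $S$ is connected; $\gamma_c(G)$ is the minimum size of a connected dominating set. *)

theory Defs
  imports Complex_Main
begin

definition simple_graph :: "'a set \<Rightarrow> ('a \<Rightarrow> 'a \<Rightarrow> bool) \<Rightarrow> bool" where
  "simple_graph V E \<longleftrightarrow> finite V \<and> (\<forall>u v. E u v \<longrightarrow> u \<in> V \<and> v \<in> V)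
     \<and> (\<forall>u v. E u v \<longrightarrow> E v u) \<and> (\<forall>v. \<not> E v v)"

definition induced_connected :: "('a \<Rightarrow> 'a \<Rightarrow> bool) \<Rightarrow> 'a set \<Rightarrow> bool" where
  "induced_connected E S \<longleftrightarrow> S \<noteq> {} \<and>
     (\<forall>u\<in>S. \<forall>v\<in>S. (\<lambda>x y. x \<in> S \<and> y \<in> S \<and> E x y)\<^sup>*\<^sup>* u v)"

definition connected_graph :: "'a set \<Rightarrow> ('a \<Rightarrow> 'a \<Rightarrow> bool) \<Rightarrow> bool" where
  "connected_graph V E \<longleftrightarrow> induced_connected E V"

definition no_isolated :: "'a set \<Rightarrow> ('a \<Rightarrow> 'a \<Rightarrow> bool) \<Rightarrow> bool" where
  "no_isolated V E \<longleftrightarrow> (\<forall>v\<in>V. \<exists>u. E v u)"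

definition dominating :: "'a set \<Rightarrow> ('a \<Rightarrow> 'a \<Rightarrow> bool) \<Rightarrow> 'a set \<Rightarrow> bool" where
  "dominating V E S \<longleftrightarrow> S \<subseteq> V \<and> (\<forall>v\<in>V - S. \<exists>u\<in>S. E v u)"

definition total_dominating :: "'a set \<Rightarrow> ('a \<Rightarrow> 'a \<Rightarrow> bool) \<Rightarrow> 'a set \<Rightarrow> bool" where
  "total_dominating V E S \<longleftrightarrow> S \<subseteq> V \<and> (\<forall>v\<in>V. \<exists>u\<in>S. E v u)"

definition connected_dominating :: "'a set \<Rightarrow> ('a \<Rightarrow> 'a \<Rightarrow> bool) \<Rightarrow> 'a set \<Rightarrow> bool" where
  "connected_dominating V E S \<longleftrightarrow> dominating V E S \<and> induced_connected E S"

definition domination_number :: "'a set \<Rightarrow> ('a \<Rightarrow> 'a \<Rightarrow> bool) \<Rightarrow> nat" where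
  "domination_number V E = (LEAST k. \<exists>S. dominating V E S \<and> card S = k)"

definition total_domination_number :: "'a set \<Rightarrow> ('a \<Rightarrow> 'a \<Rightarrow> bool) \<Rightarrow> nat" where
  "total_domination_number V E = (LEAST k. \<exists>S. total_dominating V E S \<and> card S = k)"

definition connected_domination_number :: "'a set \<Rightarrow> ('a \<Rightarrow> 'a \<Rightarrow> bool) \<Rightarrow> nat" where
  "connected_domination_number V E = (LEAST k. \<exists>S. connected_dominating V E S \<and> card S = k)"

end

theory Submission
  imports Defs
begin

lemma dn_le: "dominating V E S \<Longrightarrow> domination_number V E \<le> card S"
  unfolding domination_number_def by (rule Least_le) blast
lemma tdn_le: "total_dominating V E S \<Longrightarrow> total_domination_number V E \<le> card S"
  unfolding total_domination_number_def by (rule Least_le) blast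
lemma cdn_le: "connected_dominating V E S \<Longrightarrow> connected_domination_number V E \<le> card S"
  unfolding connected_domination_number_def by (rule Least_le) blast

lemma dn_ex: "dominating V E S0 \<Longrightarrow> \<exists>S. dominating V E S \<and> card S = domination_number V E"
  unfolding domination_number_def by (rule LeastI_ex) blast
lemma tdn_ex: "total_dominating V E S0 \<Longrightarrow> \<exists>S. total_dominating V E S \<and> card S = total_domination_number V E"
  unfolding total_domination_number_def by (rule LeastI_ex) blast
lemma cdn_ex: "connected_dominating V E S0 \<Longrightarrow> \<exists>S. connected_dominating V E S \<and> card S = connected_domination_number V E"
  unfolding connected_domination_number_def by (rule LeastI_ex) blast

lemma path_step:
  assumes "R\<^sup>*\<^sup>* u v" "u \<noteq> v" shows "\<exists>y. R u y"
  using assms by (induction rule: converse_rtranclp_induct) auto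

lemma part1:
  assumes sg: "simple_graph V E" and cg: "connected_graph V E" and ni: "no_isolated V E"
  shows "int (total_domination_number V E)
     \<le> \<lceil>2 * (real (domination_number V E) + real (connected_domination_number V E)) / 3\<rceil>"
proof -
  have fin: "finite V" and edges: "\<And>u v. E u v \<Longrightarrow> u \<in> V \<and> v \<in> V"
    and irr: "\<And>v. \<not> E v v" using sg unfolding simple_graph_def by auto
  have Vne: "V \<noteq> {}" using cg unfolding connected_graph_def induced_connected_def by auto
  have "dominating V E V" unfolding dominating_def by auto
  then obtain D where D: "dominating V E D" "card D = domination_number V E" using dn_ex by blast
  have Dsub: "D \<subseteq> V" using D unfolding dominating_def by auto
  have Dfin: "finite D" using Dsub fin finite_subset by blast
  have g1: "domination_number V E \<ge> 1"
  proof (rule ccontr)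
    assume "\<not> ?thesis"
    then have "D = {}" using D Dfin by (metis card_0_eq less_one not_le)
    then show False using D Vne unfolding dominating_def by auto
  qed
  have "connected_dominating V E V" using cg
    unfolding connected_dominating_def connected_graph_def dominating_def by auto
  then obtain C where C: "connected_dominating V E C" "card C = connected_domination_number V E"
    using cdn_ex by blast
  have Csub: "C \<subseteq> V" and Cne: "C \<noteq> {}" and Cc: "induced_connected E C"
    using C unfolding connected_dominating_def dominating_def induced_connected_def by auto
  have Cfin: "finite C" using Csub fin finite_subset by blast
  have gc1: "connected_domination_number V E \<ge> 1" using C Cne Cfin
    by (metis card_gt_0_iff Suc_leI One_nat_def)
  have ggc: "domination_number V E \<le> connected_domination_number V E"
    using C dn_le unfolding connected_dominating_def by metis
  obtain f where f: "\<And>v. v \<in> V \<Longrightarrow> E v (f v)" using ni unfolding no_isolated_def by metis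
  have "total_dominating V E (D \<union> f ` D)"
    unfolding total_dominating_def
  proof (intro conjI ballI)
    show "D \<union> f ` D \<subseteq> V" using Dsub f edges by blast
    fix w assume w: "w \<in> V"
    show "\<exists>u\<in>D \<union> f ` D. E w u"
    proof (cases "w \<in> D")
      case True then show ?thesis using f w by blast
    next
      case False then show ?thesis using D(1) w unfolding dominating_def by blast
    qed
  qed
  then have "total_domination_number V E \<le> card (D \<union> f ` D)" by (rule tdn_le)
  also have "\<dots> \<le> card D + card (f ` D)" by (rule card_Un_le)
  also have "\<dots> \<le> 2 * card D" using card_image_le[OF Dfin, of f] by simp
  finally have t2: "total_domination_number V E \<le> 2 * domination_number V E" using D by simp
  have tc: "total_domination_number V E \<le> connected_domination_number V E"
    if "connected_domination_number V E \<ge> 2"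
  proof -
    have "total_dominating V E C" unfolding total_dominating_def
    proof (intro conjI ballI)
      show "C \<subseteq> V" by (rule Csub)
      fix w assume w: "w \<in> V"
      show "\<exists>u\<in>C. E w u"
      proof (cases "w \<in> C")
        case True
        have "\<exists>u\<in>C. u \<noteq> w"
        proof (rule ccontr)
          assume "\<not> ?thesis"
          then have "C \<subseteq> {w}" by auto
          then have "card C \<le> card {w}" by (intro card_mono) auto
          then show False using that C by simp
        qed
        then obtain u where u: "u \<in> C" "u \<noteq> w" by blast
        have "(\<lambda>x y. x \<in> C \<and> y \<in> C \<and> E x y)\<^sup>*\<^sup>* w u" using Cc True u
          unfolding induced_connected_def by blast
        then show ?thesis using path_step[OF _ u(2)[symmetric]] by blast
      next
        case False then show ?thesis using C(1) w
          unfolding connected_dominating_def dominating_def by blast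
      qed
    qed
    then show ?thesis using tdn_le C by metis
  qed
  define g where "g = domination_number V E"
  define gc where "gc = connected_domination_number V E"
  define gt where "gt = total_domination_number V E"
  have A: "gt \<le> 2 * g" "g \<ge> 1" "g \<le> gc" "gc \<ge> 1" "gc \<ge> 2 \<Longrightarrow> gt \<le> gc"
    using t2 g1 ggc gc1 tc unfolding g_def gc_def gt_def by auto
  have "int gt \<le> \<lceil>2 * (real g + real gc) / 3\<rceil>"
  proof (cases "gc \<ge> 2")
    case True
    then have "gt \<le> gc" using A by simp
    then have "3 * gt \<le> 2 * (g + gc)" using A(1) by presburger
    then have "real (3 * gt) \<le> real (2 * (g + gc))" by (simp only: of_nat_le_iff)
    then have "3 * real gt \<le> 2 * (real g + real gc)" by simp
    then have "real gt \<le> 2 * (real g + real gc) / 3" by simp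
    from ceiling_mono[OF this] show ?thesis by simp
  next
    case False
    then have "gc = 1" "g = 1" using A by auto
    then have "gt \<le> 2" using A by simp
    moreover have "\<lceil>2 * (real g + real gc) / 3\<rceil> = 2" using \<open>gc = 1\<close> \<open>g = 1\<close> by simp
    ultimately show ?thesis by simp
  qed
  then show ?thesis unfolding g_def gc_def gt_def .
qed


lemma lower_bounds:
  assumes sg: "simple_graph V E" and Vne: "V \<noteq> {}" and ni: "no_isolated V E"
  shows "domination_number V E \<ge> 1" "total_domination_number V E \<ge> 2"
proof -
  have fin: "finite V" and edges: "\<And>u v. E u v \<Longrightarrow> u \<in> V \<and> v \<in> V"
    and irr: "\<And>v. \<not> E v v" using sg unfolding simple_graph_def by auto
  have "dominating V E V" unfolding dominating_def by auto
  then obtain D where D: "dominating V E D" "card D = domination_number V E" using dn_ex by blast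
  have Dsub: "D \<subseteq> V" using D unfolding dominating_def by auto
  have Dfin: "finite D" using Dsub fin finite_subset by blast
  show "domination_number V E \<ge> 1"
  proof (rule ccontr)
    assume "\<not> ?thesis"
    then have "D = {}" using D Dfin by (metis card_0_eq less_one not_le)
    then show False using D Vne unfolding dominating_def by auto
  qed
  have "total_dominating V E V" using ni edges unfolding total_dominating_def no_isolated_def by blast
  then obtain T where T: "total_dominating V E T" "card T = total_domination_number V E"
    using tdn_ex by blast
  have Tsub: "T \<subseteq> V" using T unfolding total_dominating_def by auto
  have Tfin: "finite T" using Tsub fin finite_subset by blast
  obtain v where "v \<in> V" using Vne by blast
  then obtain u where u: "u \<in> T" using T unfolding total_dominating_def by blast
  then obtain u' where u': "u' \<in> T" "E u u'" using T Tsub unfolding total_dominating_def by blast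
  have "u \<noteq> u'" using u' irr by metis
  then have "card {u, u'} = 2" by simp
  moreover have "card {u, u'} \<le> card T" using u u' Tfin by (intro card_mono) auto
  ultimately show "total_domination_number V E \<ge> 2" using T by simp
qed

lemma part2: "\<exists>(V :: nat set) E. simple_graph V E \<and> connected_graph V E \<and> no_isolated V E
            \<and> card V \<ge> n \<and>
            int (total_domination_number V E)
              = \<lceil>2 * (real (domination_number V E) + real (connected_domination_number V E)) / 3\<rceil>"
proof -
  define V :: "nat set" where "V = {0..Suc n}"
  define E where "E = (\<lambda>x y. x \<in> V \<and> y \<in> V \<and> x \<noteq> y \<and> (x = 0 \<or> y = 0))"
  have sg: "simple_graph V E" unfolding simple_graph_def E_def V_def by auto
  have V0: "0 \<in> V" "Suc 0 \<in> V" unfolding V_def by auto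
  let ?R = "\<lambda>x y. x \<in> V \<and> y \<in> V \<and> E x y"
  have to0: "?R\<^sup>*\<^sup>* u 0" if "u \<in> V" for u
    using that V0 by (cases "u = 0") (auto simp: E_def intro: r_into_rtranclp)
  have from0: "?R\<^sup>*\<^sup>* 0 u" if "u \<in> V" for u
    using that V0 by (cases "u = 0") (auto simp: E_def intro: r_into_rtranclp)
  have cg: "connected_graph V E" unfolding connected_graph_def induced_connected_def
    using V0 to0 from0 by (meson empty_iff rtranclp_trans)
  have ni: "no_isolated V E" unfolding no_isolated_def
  proof
    fix v assume "v \<in> V"
    then show "\<exists>u. E v u" using V0 unfolding E_def by (cases "v = 0") auto
  qed
  have cardV: "card V \<ge> n" unfolding V_def by simp
  have cd0: "connected_dominating V E {0}"
    unfolding connected_dominating_def dominating_def induced_connected_def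
    using V0 by (auto simp: E_def)
  have g: "domination_number V E = 1"
    using dn_le[of V E "{0}"] cd0 lower_bounds(1)[OF sg _ ni] V0
    unfolding connected_dominating_def by fastforce
  have gc1: "connected_domination_number V E \<le> 1" using cdn_le[OF cd0] by simp
  have "connected_domination_number V E \<ge> domination_number V E"
  proof -
    obtain C where C: "connected_dominating V E C" "card C = connected_domination_number V E"
      using cdn_ex[OF cd0] by blast
    then show ?thesis using dn_le[of V E C] unfolding connected_dominating_def by simp
  qed
  then have gc: "connected_domination_number V E = 1" using g gc1 by simp
  have td: "total_dominating V E {0, Suc 0}"
    unfolding total_dominating_def using V0 by (auto simp: E_def)
  have gt: "total_domination_number V E = 2"
    using tdn_le[OF td] lower_bounds(2)[OF sg _ ni] V0 by fastforce
  show ?thesis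
    by (rule exI[of _ V], rule exI[of _ E]) (simp add: sg cg ni cardV g gc gt)
qed

theorem theorem2p3:
  shows "(\<forall>(V :: 'a set) E. simple_graph V E \<and> connected_graph V E \<and> no_isolated V E \<longrightarrow>
            int (total_domination_number V E)
              \<le> \<lceil>2 * (real (domination_number V E) + real (connected_domination_number V E)) / 3\<rceil>)
       \<and> (\<forall>n. \<exists>(V :: nat set) E. simple_graph V E \<and> connected_graph V E \<and> no_isolated V E
            \<and> card V \<ge> n \<and>
            int (total_domination_number V E)
              = \<lceil>2 * (real (domination_number V E) + real (connected_domination_number V E)) / 3\<rceil>)"
  using part1 part2 by blast

end
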